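(* Let $G$ be a unit interval graph, i.e. the intersection graph of a finite family of closed intervals of the real line all of length one. Then $p(G)\le 2$.
   Context: A comparability graph is a graph admitting a transitive orientation. $p(G)$ is the minimum number $m$ such that $E(G)$ is the union of the edge sets of $m$ pairwise edge-disjoint comparability subgraphs of $G$. *)

theory Defs
  imports Complex_Main
begin

text \<open>Simple graphs: a vertex set V and a symmetric, irreflexive edge relation
  E \<subseteq> V \<times> V (each undirected edge uv is stored as both (u,v) and (v,u)).\<close>

definition simple_graph :: "'a set \<Rightarrow> ('a \<times> 'a) set \<Rightarrow> bool" where
  "simple_graph V E \<longleftrightarrow> E \<subseteq> V \<times> V \<and> sym E \<and> irrefl E"

definition transitive_orientation :: "('a \<times> 'a) set \<Rightarrow> ('a \<times> 'a) set \<Rightarrow> bool" where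
  "transitive_orientation F Or \<longleftrightarrow>
     Or \<subseteq> F \<and> (\<forall>u v. (u, v) \<in> F \<longrightarrow> ((u, v) \<in> Or \<longleftrightarrow> (v, u) \<notin> Or)) \<and> trans Or"

definition comparability_edges :: "('a \<times> 'a) set \<Rightarrow> bool" where
  "comparability_edges F \<longleftrightarrow> (\<exists>Or. transitive_orientation F Or)"

definition comparability_subgraph :: "'a set \<Rightarrow> ('a \<times> 'a) set \<Rightarrow> ('a \<times> 'a) set \<Rightarrow> bool" where
  "comparability_subgraph V E F \<longleftrightarrow> F \<subseteq> E \<and> sym F \<and> comparability_edges F"

definition comparability_cover :: "'a set \<Rightarrow> ('a \<times> 'a) set \<Rightarrow> nat \<Rightarrow> bool" where
  "comparability_cover V E m \<longleftrightarrow>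
     (\<exists>F :: nat \<Rightarrow> ('a \<times> 'a) set.
        (\<forall>i<m. comparability_subgraph V E (F i)) \<and>
        (\<forall>i<m. \<forall>j<m. i \<noteq> j \<longrightarrow> F i \<inter> F j = {}) \<and>
        (\<Union>i<m. F i) = E)"

definition p_number :: "'a set \<Rightarrow> ('a \<times> 'a) set \<Rightarrow> nat" where
  "p_number V E = (LEAST m. comparability_cover V E m)"

definition unit_interval_graph :: "'a set \<Rightarrow> ('a \<times> 'a) set \<Rightarrow> bool" where
  "unit_interval_graph V E \<longleftrightarrow> finite V \<and>
     (\<exists>a :: 'a \<Rightarrow> real.
        E = {(u, v). u \<in> V \<and> v \<in> V \<and> u \<noteq> v \<and>
                     {a u .. a u + 1} \<inter> {a v .. a v + 1} \<noteq> {}})"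

end

theory Submission
  imports Defs
begin

lemma edge_dist:
  fixes x y :: real
  assumes "{x .. x + 1} \<inter> {y .. y + 1} \<noteq> {}"
  shows "\<bar>x - y\<bar> \<le> 1"
  using assms by auto

lemma floor_close:
  fixes x y :: real
  assumes "\<bar>x - y\<bar> \<le> 1"
  shows "floor x \<le> floor y + 1"
proof -
  have "floor x \<le> floor (y + 1)" using assms by (intro floor_mono) auto
  then show ?thesis by simp
qed

theorem theorem5:
  fixes V :: "'a set" and E :: "('a \<times> 'a) set"
  assumes "unit_interval_graph V E"
  shows "p_number V E \<le> 2"
proof -
  have "\<exists>a :: 'a \<Rightarrow> real. E = {(u, v). u \<in> V \<and> v \<in> V \<and> u \<noteq> v \<and>
                     {a u .. a u + 1} \<inter> {a v .. a v + 1} \<noteq> {}}"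
    using assms unfolding unit_interval_graph_def by blast
  then obtain a :: "'a \<Rightarrow> real" where Edef: "E = {(u, v). u \<in> V \<and> v \<in> V \<and> u \<noteq> v \<and>
                     {a u .. a u + 1} \<inter> {a v .. a v + 1} \<noteq> {}}" ..
  have "\<exists>r::'a rel. Well_order r \<and> Field r = UNIV" by (rule well_ordering)
  then obtain r :: "'a rel" where r0: "Well_order r \<and> Field r = UNIV" ..
  note r = conjunct1[OF r0] conjunct2[OF r0]
  have rtot: "total_on UNIV r" and rant: "antisym r" and rtr: "trans r"
    using r unfolding well_order_on_def linear_order_on_def partial_order_on_def preorder_on_def
    by metis+
  have symE: "(v, u) \<in> E" if "(u, v) \<in> E" for u v using that unfolding Edef by (simp add: Int_commute) blast
  have close: "floor (a u) \<le> floor (a v) + 1" if "(u, v) \<in> E" for u v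
  proof -
    have "{a u .. a u + 1} \<inter> {a v .. a v + 1} \<noteq> {}" using that unfolding Edef by blast
    then show ?thesis by (intro floor_close edge_dist)
  qed
  define F0 where "F0 = {(u, v) \<in> E. floor (a u) = floor (a v)}"
  define F1 where "F1 = {(u, v) \<in> E. floor (a u) \<noteq> floor (a v)}"
  define F where "F = (\<lambda>i::nat. if i = 0 then F0 else F1)"
  have c0: "comparability_subgraph V E F0"
    unfolding comparability_subgraph_def comparability_edges_def
  proof (intro conjI exI)
    show "F0 \<subseteq> E" unfolding F0_def by auto
    show "sym F0" unfolding F0_def sym_def using symE by auto
    let ?O = "{(u, v) \<in> F0. (u, v) \<in> r}"
    show "transitive_orientation F0 ?O"
      unfolding transitive_orientation_def
    proof (intro conjI allI impI)
      show "?O \<subseteq> F0" by auto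
    next
      fix u v assume uv: "(u, v) \<in> F0"
      then have "u \<noteq> v" unfolding F0_def Edef by blast
      moreover have "(v, u) \<in> F0" using uv symE unfolding F0_def by auto
      ultimately show "((u, v) \<in> ?O) = ((v, u) \<notin> ?O)"
        using uv rtot rant unfolding total_on_def antisym_def by auto
    next
      show "trans ?O" unfolding trans_def
      proof (intro allI impI)
        fix x y z assume h: "(x, y) \<in> ?O" "(y, z) \<in> ?O"
        have xz: "(x, z) \<in> r" using h rtr unfolding trans_def by blast
        have "x \<noteq> z"
        proof
          assume "x = z"
          then have "x = y" using h rant unfolding antisym_def by auto
          then show False using h unfolding F0_def Edef by blast
        qed
        moreover have "x \<in> V" "z \<in> V"
          using h unfolding F0_def Edef by blast+
        moreover have "floor (a x) = floor (a z)"
        proof -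
          have "floor (a x) = floor (a y)" "floor (a y) = floor (a z)" using h unfolding F0_def by auto
          then show ?thesis by simp
        qed
        moreover have "\<bar>a x - a z\<bar> < 1"
          using \<open>floor (a x) = floor (a z)\<close> by linarith
        moreover have "{a x .. a x + 1} \<inter> {a z .. a z + 1} \<noteq> {}"
        proof (cases "a x \<le> a z")
          case True
          then have "a z \<in> {a x .. a x + 1} \<inter> {a z .. a z + 1}" using \<open>\<bar>a x - a z\<bar> < 1\<close> by simp
          then show ?thesis by blast
        next
          case False
          then have "a x \<in> {a x .. a x + 1} \<inter> {a z .. a z + 1}" using \<open>\<bar>a x - a z\<bar> < 1\<close> by simp
          then show ?thesis by blast
        qed
        ultimately have "(x, z) \<in> E" unfolding Edef by blast
        then have "(x, z) \<in> F0" unfolding F0_def using \<open>floor (a x) = floor (a z)\<close> by auto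
        then show "(x, z) \<in> ?O" using xz by auto
      qed
    qed
  qed
  have c1: "comparability_subgraph V E F1"
    unfolding comparability_subgraph_def comparability_edges_def
  proof (intro conjI exI)
    show "F1 \<subseteq> E" unfolding F1_def by auto
    show "sym F1" unfolding F1_def sym_def using symE by auto
    let ?O = "{(u, v) \<in> F1. even (floor (a u))}"
    show "transitive_orientation F1 ?O"
      unfolding transitive_orientation_def
    proof (intro conjI allI impI)
      show "?O \<subseteq> F1" by auto
    next
      fix u v assume uv: "(u, v) \<in> F1"
      then have "(v, u) \<in> F1" using symE unfolding F1_def by auto
      moreover have "floor (a u) = floor (a v) + 1 \<or> floor (a v) = floor (a u) + 1"
      proof -
        have e: "(u, v) \<in> E" "floor (a u) \<noteq> floor (a v)" using uv unfolding F1_def by auto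
        have "floor (a u) \<le> floor (a v) + 1" by (rule close[OF e(1)])
        moreover have "floor (a v) \<le> floor (a u) + 1" by (rule close[OF symE[OF e(1)]])
        ultimately show ?thesis using e(2) by linarith
      qed
      ultimately show "((u, v) \<in> ?O) = ((v, u) \<notin> ?O)"
        using uv by auto
    next
      show "trans ?O" unfolding trans_def
      proof (intro allI impI)
        fix x y z assume h: "(x, y) \<in> ?O" "(y, z) \<in> ?O"
        have "floor (a x) = floor (a y) + 1 \<or> floor (a y) = floor (a x) + 1"
        proof -
          have e: "(x, y) \<in> E" "floor (a x) \<noteq> floor (a y)" using h unfolding F1_def by auto
          have "floor (a x) \<le> floor (a y) + 1" by (rule close[OF e(1)])
          moreover have "floor (a y) \<le> floor (a x) + 1" by (rule close[OF symE[OF e(1)]])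
          ultimately show ?thesis using e(2) by linarith
        qed
        then have "odd (floor (a y))" using h by auto
        then show "(x, z) \<in> ?O" using h by auto
      qed
    qed
  qed
  have F0: "F 0 = F0" and F1: "F 1 = F1" unfolding F_def by simp_all
  have disj: "F0 \<inter> F1 = {}" unfolding F0_def F1_def by blast
  have un: "F0 \<union> F1 = E" unfolding F0_def F1_def by blast
  have "comparability_cover V E 2"
    unfolding comparability_cover_def
  proof (intro exI conjI allI impI)
    fix i :: nat assume "i < 2"
    then have "i = 0 \<or> i = 1" by linarith
    then show "comparability_subgraph V E (F i)" using c0 c1 F0 F1 by metis
  next
    fix i j :: nat assume "i < 2" "j < 2" "i \<noteq> j"
    then have "(i = 0 \<and> j = 1) \<or> (i = 1 \<and> j = 0)" by linarith
    then show "F i \<inter> F j = {}" using disj F0 F1 by (metis inf_commute)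
  next
    have "{..<2::nat} = {0, 1}" by auto
    then have "(\<Union>i<2. F i) = F 0 \<union> F 1" by simp
    then show "(\<Union>i<2. F i) = E" using F0 F1 un by simp
  qed
  then show ?thesis unfolding p_number_def by (rule Least_le)
qed

end
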